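(* Let $\mathcal G=(\mathcal V,\mathcal E,W)$ be a network, $h\in\mathbb{R}^{\mathcal V}$, and consider the SNC game with binary actions on $\mathcal G$ with external field $h$. Let $\mathcal V=\mathcal R\cup\mathcal S$, $\mathcal R\cap\mathcal S=\emptyset$, be a binary partition such that $\mathcal G_{\mathcal R}$ is structurally balanced and $\mathcal G_{\mathcal S}$ is undirected, and let $\tau\in\{\pm1\}^{\mathcal R}$ be such that $\mathcal G_{\mathcal R}^{[\tau]}$ is unsigned. Let $h^-,h^+\in\mathbb{R}^{\mathcal R}$ be given by $h_i^+=\tau_ih_i+w_i^{\mathcal S}$ and $h_i^-=\tau_ih_i-w_i^{\mathcal S}$ for $i\in\mathcal R$. If $\mathcal G_{\mathcal R}$ is $(h^-,h^+)$-indecomposable and $w_i^{\mathcal R}-|h_i|>w_i^{\mathcal S}$ for all $i\in\mathcal R$, then there exists a globally BR-stable subset of the set of Nash equilibria of the game.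
   Context: A network is a triple $\mathcal G=(\mathcal V,\mathcal E,W)$ where $\mathcal V$ is a finite nonempty set, $\mathcal E\subseteq\mathcal V\times\mathcal V$, and $W\in\mathbb{R}^{\mathcal V\times\mathcal V}$ has zero diagonal and satisfies $W_{ij}\neq0$ iff $(i,j)\in\mathcal E$ (weights may have either sign). It is unsigned if $W\ge0$ entrywise and undirected if its weight matrix is symmetric. For $\mathcal U\subseteq\mathcal V$, the subnetwork $\mathcal G_{\mathcal U}$ has node set $\mathcal U$, links $\mathcal E\cap(\mathcal U\times\mathcal U)$ and weight matrix $W_{\mathcal U\mathcal U}$. A network is structurally balanced if its node set can be written as a disjoint union of two sets with nonnegative weights on links within each set and nonpositive weights on links between the two sets. For $\tau\in\{\pm1\}^{\mathcal R}$, $\mathcal G_{\mathcal R}^{[\tau]}$ is the network with the same nodes and links as $\mathcal G_{\mathcal R}$ and weight matrix $[\tau]W_{\mathcal R\mathcal R}[\tau]$, where $[\tau]$ is the diagonal matrix with diagonal $\tau$. For $i\in\mathcal V$ and $\mathcal B\subseteq\mathcal V$, $w_i^{\mathcal B}=\sum_{j\in\mathcal B}|W_{ij}|$. Indecomposability: a network with node set $\mathcal U$ and $h^-\le h^+$ in $\mathbb{R}^{\mathcal U}$ is $(h^-,h^+)$-indecomposable if for every partition $\mathcal U=\mathcal U^-\cup\mathcal U^+$ into two disjoint nonempty sets there is a node $i$ with either $i\in\mathcal U^+$ and $w_i^{\mathcal U^+}+h_i^+<w_i^{\mathcal U^-}$, or $i\in\mathcal U^-$ and $w_i^{\mathcal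 U^-}-h_i^-<w_i^{\mathcal U^+}$. The SNC game with binary actions on $\mathcal G$ with external field $h\in\mathbb{R}^{\mathcal V}$ has player set $\mathcal V$, action set $\{-1,+1\}$ for each player, strategy profiles $\mathcal X=\{\pm1\}^{\mathcal V}$, and utilities $u_i(x)=h_ix_i+x_i\sum_{j\in\mathcal V}W_{ij}x_j$. Best responses $\mathcal B_i(x_{-i})=\arg\max_{x_i\in\{\pm1\}}u_i(x_i,x_{-i})$; Nash equilibrium: $x^*_i\in\mathcal B_i(x^*_{-i})$ for all $i$. A BR-path of length $l\ge0$ from $x$ to $y$ is a sequence $x^{(0)}=x,\dots,x^{(l)}=y$ such that for each $k$ some player $i_k$ has $x^{(k)}_{-i_k}=x^{(k-1)}_{-i_k}$ and $x^{(k)}_{i_k}\in\mathcal B_{i_k}(x^{(k-1)}_{-i_k})\setminus\{x^{(k-1)}_{i_k}\}$. A set $\mathcal X^*\subseteq\mathcal X$ is globally BR-reachable if from every profile there is a BR-path to some element of $\mathcal X^*$; BR-invariant if there is no BR-path from an element of $\mathcal X^*$ to an element outside; globally BR-stable if both. *)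

theory Defs
  imports Complex_Main
begin

text \<open>A network on node set V with weight matrix W (edges are the pairs with nonzero
weight, so they are determined by W).\<close>
definition network :: "'v set \<Rightarrow> ('v \<Rightarrow> 'v \<Rightarrow> real) \<Rightarrow> bool" where
  "network V W \<longleftrightarrow> finite V \<and> V \<noteq> {} \<and> (\<forall>i\<in>V. W i i = 0)"

definition wsum :: "('v \<Rightarrow> 'v \<Rightarrow> real) \<Rightarrow> 'v \<Rightarrow> 'v set \<Rightarrow> real" where
  "wsum W i B = (\<Sum>j\<in>B. \<bar>W i j\<bar>)"

definition structurally_balanced :: "'v set \<Rightarrow> ('v \<Rightarrow> 'v \<Rightarrow> real) \<Rightarrow> bool" where
  "structurally_balanced U W \<longleftrightarrow>
     (\<exists>A B. A \<union> B = U \<and> A \<inter> B = {} \<and>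
        (\<forall>i\<in>U. \<forall>j\<in>U. ((i \<in> A \<longleftrightarrow> j \<in> A) \<longrightarrow> W i j \<ge> 0) \<and>
                      ((i \<in> A \<longleftrightarrow> j \<notin> A) \<longrightarrow> W i j \<le> 0)))"

definition undirected_on :: "'v set \<Rightarrow> ('v \<Rightarrow> 'v \<Rightarrow> real) \<Rightarrow> bool" where
  "undirected_on U W \<longleftrightarrow> (\<forall>i\<in>U. \<forall>j\<in>U. W i j = W j i)"

definition gauge_unsigned :: "'v set \<Rightarrow> ('v \<Rightarrow> 'v \<Rightarrow> real) \<Rightarrow> ('v \<Rightarrow> real) \<Rightarrow> bool" where
  "gauge_unsigned U W tau \<longleftrightarrow> (\<forall>i\<in>U. \<forall>j\<in>U. tau i * W i j * tau j \<ge> 0)"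

definition indecomposable ::
  "'v set \<Rightarrow> ('v \<Rightarrow> 'v \<Rightarrow> real) \<Rightarrow> ('v \<Rightarrow> real) \<Rightarrow> ('v \<Rightarrow> real) \<Rightarrow> bool" where
  "indecomposable U W hm hp \<longleftrightarrow>
     (\<forall>Um Up. Um \<union> Up = U \<and> Um \<inter> Up = {} \<and> Um \<noteq> {} \<and> Up \<noteq> {} \<longrightarrow>
        (\<exists>i. (i \<in> Up \<and> wsum W i Up + hp i < wsum W i Um) \<or>
             (i \<in> Um \<and> wsum W i Um - hm i < wsum W i Up)))"

definition profiles :: "'v set \<Rightarrow> ('v \<Rightarrow> real) set" where
  "profiles V = {x. (\<forall>i\<in>V. x i = -1 \<or> x i = 1) \<and> (\<forall>i. i \<notin> V \<longrightarrow> x i = 0)}"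

definition utility :: "'v set \<Rightarrow> ('v \<Rightarrow> 'v \<Rightarrow> real) \<Rightarrow> ('v \<Rightarrow> real) \<Rightarrow> 'v \<Rightarrow> ('v \<Rightarrow> real) \<Rightarrow> real" where
  "utility V W h i x = h i * x i + x i * (\<Sum>j\<in>V. W i j * x j)"

definition best_resp :: "'v set \<Rightarrow> ('v \<Rightarrow> 'v \<Rightarrow> real) \<Rightarrow> ('v \<Rightarrow> real) \<Rightarrow> 'v \<Rightarrow> ('v \<Rightarrow> real) \<Rightarrow> real set" where
  "best_resp V W h i x = {a \<in> {-1, 1}. \<forall>b\<in>{-1, 1}.
      utility V W h i (x(i := b)) \<le> utility V W h i (x(i := a))}"

definition nash :: "'v set \<Rightarrow> ('v \<Rightarrow> 'v \<Rightarrow> real) \<Rightarrow> ('v \<Rightarrow> real) \<Rightarrow> ('v \<Rightarrow> real) set" where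
  "nash V W h = {x \<in> profiles V. \<forall>i\<in>V. x i \<in> best_resp V W h i x}"

definition br_step :: "'v set \<Rightarrow> ('v \<Rightarrow> 'v \<Rightarrow> real) \<Rightarrow> ('v \<Rightarrow> real) \<Rightarrow> ('v \<Rightarrow> real) \<Rightarrow> ('v \<Rightarrow> real) \<Rightarrow> bool" where
  "br_step V W h x y \<longleftrightarrow> (\<exists>i\<in>V. y = x(i := y i) \<and> y i \<in> best_resp V W h i x \<and> y i \<noteq> x i)"

definition br_path :: "'v set \<Rightarrow> ('v \<Rightarrow> 'v \<Rightarrow> real) \<Rightarrow> ('v \<Rightarrow> real) \<Rightarrow> ('v \<Rightarrow> real) \<Rightarrow> ('v \<Rightarrow> real) \<Rightarrow> bool" where
  "br_path V W h = (br_step V W h)\<^sup>*\<^sup>*"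

definition globally_BR_reachable :: "'v set \<Rightarrow> ('v \<Rightarrow> 'v \<Rightarrow> real) \<Rightarrow> ('v \<Rightarrow> real) \<Rightarrow> ('v \<Rightarrow> real) set \<Rightarrow> bool" where
  "globally_BR_reachable V W h X \<longleftrightarrow> (\<forall>x\<in>profiles V. \<exists>y\<in>X. br_path V W h x y)"

definition BR_invariant :: "'v set \<Rightarrow> ('v \<Rightarrow> 'v \<Rightarrow> real) \<Rightarrow> ('v \<Rightarrow> real) \<Rightarrow> ('v \<Rightarrow> real) set \<Rightarrow> bool" where
  "BR_invariant V W h X \<longleftrightarrow> (\<forall>x\<in>X. \<forall>y. br_path V W h x y \<longrightarrow> y \<in> X)"

definition globally_BR_stable :: "'v set \<Rightarrow> ('v \<Rightarrow> 'v \<Rightarrow> real) \<Rightarrow> ('v \<Rightarrow> real) \<Rightarrow> ('v \<Rightarrow> real) set \<Rightarrow> bool" where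
  "globally_BR_stable V W h X \<longleftrightarrow> globally_BR_reachable V W h X \<and> BR_invariant V W h X"

end

theory Submission
  imports Defs
begin

definition inp :: "'v set \<Rightarrow> ('v \<Rightarrow> 'v \<Rightarrow> real) \<Rightarrow> ('v \<Rightarrow> real) \<Rightarrow> ('v \<Rightarrow> real) \<Rightarrow> 'v \<Rightarrow> real" where
  "inp V W h x i = h i + (\<Sum>j\<in>V. W i j * x j)"

definition Upset :: "'v set \<Rightarrow> ('v \<Rightarrow> real) \<Rightarrow> ('v \<Rightarrow> real) \<Rightarrow> 'v set" where
  "Upset R tau x = {j\<in>R. x j = tau j}"

definition Umset :: "'v set \<Rightarrow> ('v \<Rightarrow> real) \<Rightarrow> ('v \<Rightarrow> real) \<Rightarrow> 'v set" where
  "Umset R tau x = {j\<in>R. x j = - tau j}"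

lemma inp_upd:
  assumes "W i i = 0"
  shows "inp V W h (x(i:=b)) i = inp V W h x i"
  unfolding inp_def
proof -
  have "(\<Sum>j\<in>V. W i j * (x(i:=b)) j) = (\<Sum>j\<in>V. W i j * x j)"
    by (rule sum.cong) (auto simp: assms)
  then show "h i + (\<Sum>j\<in>V. W i j * (x(i:=b)) j) = h i + (\<Sum>j\<in>V. W i j * x j)" by simp
qed

lemma utility_upd:
  assumes "W i i = 0"
  shows "utility V W h i (x(i:=b)) = b * inp V W h x i"
proof -
  have "utility V W h i (x(i:=b)) = b * inp V W h (x(i:=b)) i"
    unfolding utility_def inp_def by (simp add: algebra_simps)
  then show ?thesis using inp_upd[of W i, OF assms] by simp
qed

lemma best_resp_iff:
  assumes "W i i = 0"
  shows "a \<in> best_resp V W h i x \<longleftrightarrow> a \<in> {-1,1} \<and> a * inp V W h x i \<ge> 0"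
proof -
  let ?c = "inp V W h x i"
  have "a \<in> best_resp V W h i x \<longleftrightarrow> a \<in> {-1,1} \<and> (\<forall>b\<in>{-1,1}. b * ?c \<le> a * ?c)"
    unfolding best_resp_def using utility_upd[of W i, OF assms] by simp
  also have "\<dots> \<longleftrightarrow> a \<in> {-1,1} \<and> a * ?c \<ge> 0"
    by auto
  finally show ?thesis .
qed

lemma finite_profiles: "finite V \<Longrightarrow> finite (profiles V)"
proof -
  assume "finite V"
  have "profiles V \<subseteq> {f. \<forall>x. (x \<in> V \<longrightarrow> f x \<in> {-1,1}) \<and> (x \<notin> V \<longrightarrow> f x = 0)}"
    unfolding profiles_def by auto
  moreover have "finite {f. \<forall>x. (x \<in> V \<longrightarrow> f x \<in> {-1,1::real}) \<and> (x \<notin> V \<longrightarrow> f x = 0)}"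
    by (rule finite_set_of_finite_funs[OF \<open>finite V\<close>]) simp
  ultimately show ?thesis by (rule finite_subset)
qed

locale gm =
  fixes V :: "'v set" and W :: "'v \<Rightarrow> 'v \<Rightarrow> real" and h :: "'v \<Rightarrow> real"
  assumes diag: "\<And>i. i \<in> V \<Longrightarrow> W i i = 0" and finV: "finite V"
begin

lemma br_step_iff:
  assumes "x \<in> profiles V"
  shows "br_step V W h x y \<longleftrightarrow> (\<exists>i\<in>V. y = x(i := - x i) \<and> x i * inp V W h x i \<le> 0)"
proof
  assume "br_step V W h x y"
  then obtain i where i: "i\<in>V" "y = x(i := y i)" "y i \<in> best_resp V W h i x" "y i \<noteq> x i"
    unfolding br_step_def by blast
  have xi: "x i = -1 \<or> x i = 1" using assms(1) i(1) unfolding profiles_def by auto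
  have yi: "y i \<in> {-1,1}" "y i * inp V W h x i \<ge> 0" using i(3) best_resp_iff[of W i, OF diag[OF i(1)]] by simp_all
  have yx: "y i = - x i" using xi yi(1) i(4) by auto
  have yeq: "y = x(i := - x i)" using i(2) unfolding yx .
  have "x i * inp V W h x i \<le> 0" using yi(2) unfolding yx by simp
  then show "\<exists>i\<in>V. y = x(i := - x i) \<and> x i * inp V W h x i \<le> 0"
    using i(1) yeq by blast
next
  assume "\<exists>i\<in>V. y = x(i := - x i) \<and> x i * inp V W h x i \<le> 0"
  then obtain i where i: "i\<in>V" "y = x(i := - x i)" "x i * inp V W h x i \<le> 0" by blast
  have xi: "x i = -1 \<or> x i = 1" using assms(1) i(1) unfolding profiles_def by auto
  have "y i \<in> best_resp V W h i x" using i xi best_resp_iff[of W i, OF diag[OF i(1)]] by auto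
  moreover have "y i \<noteq> x i" using i xi by auto
  moreover have "y = x(i := y i)" by (simp add: i(2))
  ultimately show "br_step V W h x y" unfolding br_step_def using i(1) by blast
qed

lemma br_step_profiles:
  assumes "x \<in> profiles V" "br_step V W h x y"
  shows "y \<in> profiles V"
proof -
  obtain i where i: "i \<in> V" "y = x(i := - x i)" using assms br_step_iff[OF assms(1)] by blast
  have "x i = -1 \<or> x i = 1" using assms(1) i(1) unfolding profiles_def by auto
  then show ?thesis using assms(1) i unfolding profiles_def by auto
qed

lemma br_path_profiles:
  assumes "br_path V W h x y" "x \<in> profiles V"
  shows "y \<in> profiles V"
  using assms(1,2) unfolding br_path_def
  by (induction rule: rtranclp_induct) (auto intro: br_step_profiles)

lemma nash_iff:
  "x \<in> nash V W h \<longleftrightarrow> x \<in> profiles V \<and> (\<forall>i\<in>V. x i * inp V W h x i \<ge> 0)"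
proof -
  have "x \<in> profiles V \<Longrightarrow> i \<in> V \<Longrightarrow> x i \<in> best_resp V W h i x \<longleftrightarrow> x i * inp V W h x i \<ge> 0" for i
    using best_resp_iff[of W i, OF diag] unfolding profiles_def by auto
  note b = this
  show ?thesis
  proof
    assume "x \<in> nash V W h"
    then show "x \<in> profiles V \<and> (\<forall>i\<in>V. x i * inp V W h x i \<ge> 0)"
      unfolding nash_def using b by blast
  next
    assume "x \<in> profiles V \<and> (\<forall>i\<in>V. x i * inp V W h x i \<ge> 0)"
    then show "x \<in> nash V W h"
      unfolding nash_def using b by blast
  qed
qed

end

locale st = gm +
  fixes R S :: "'v set" and tau :: "'v \<Rightarrow> real"
  assumes VRS: "V = R \<union> S" and disj: "R \<inter> S = {}"
    and undir: "undirected_on S W"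
    and tauv: "\<forall>i\<in>R. tau i = -1 \<or> tau i = 1"
    and gauge: "gauge_unsigned R W tau"
    and indec: "indecomposable R W (\<lambda>i. tau i * h i - wsum W i S) (\<lambda>i. tau i * h i + wsum W i S)"
    and strong: "\<forall>i\<in>R. wsum W i R - \<bar>h i\<bar> > wsum W i S"
begin

lemma finR: "finite R" and finS: "finite S" using finV VRS by auto

lemma tau_sq: "j \<in> R \<Longrightarrow> tau j * tau j = 1" using tauv by auto

lemma prof_val: "x \<in> profiles V \<Longrightarrow> j \<in> V \<Longrightarrow> x j = -1 \<or> x j = 1"
  unfolding profiles_def by auto

lemma part:
  assumes "x \<in> profiles V"
  shows "Upset R tau x \<union> Umset R tau x = R" "Upset R tau x \<inter> Umset R tau x = {}"
proof -
  have "j \<in> R \<Longrightarrow> x j = tau j \<or> x j = - tau j" for j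
    using prof_val[OF assms, of j] tauv VRS by auto
  then show "Upset R tau x \<union> Umset R tau x = R" unfolding Upset_def Umset_def by auto
  have "j \<in> R \<Longrightarrow> tau j \<noteq> - tau j" for j using tauv by auto
  then show "Upset R tau x \<inter> Umset R tau x = {}" unfolding Upset_def Umset_def by auto
qed

lemma wsum_nonneg: "wsum W i A \<ge> 0" unfolding wsum_def by (simp add: sum_nonneg)

lemma gauge_term: "i \<in> R \<Longrightarrow> j \<in> R \<Longrightarrow> tau i * W i j * tau j = \<bar>W i j\<bar>"
proof -
  assume ij: "i \<in> R" "j \<in> R"
  have "tau i * W i j * tau j \<ge> 0" using gauge ij unfolding gauge_unsigned_def by auto
  moreover have "\<bar>tau i\<bar> = 1" "\<bar>tau j\<bar> = 1" using tauv ij by auto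
  then have "\<bar>tau i * W i j * tau j\<bar> = \<bar>W i j\<bar>" by (simp add: abs_mult)
  ultimately show ?thesis by linarith
qed

lemma gauge_bounds:
  assumes x: "x \<in> profiles V" and i: "i \<in> R"
  shows "tau i * inp V W h x i \<ge> tau i * h i + wsum W i (Upset R tau x) - wsum W i (Umset R tau x) - wsum W i S"
    and "tau i * inp V W h x i \<le> tau i * h i + wsum W i (Upset R tau x) - wsum W i (Umset R tau x) + wsum W i S"
proof -
  let ?U = "Upset R tau x" and ?M = "Umset R tau x"
  have split: "inp V W h x i = h i + (\<Sum>j\<in>R. W i j * x j) + (\<Sum>j\<in>S. W i j * x j)"
    unfolding inp_def VRS using finR finS disj by (simp add: sum.union_disjoint)
  have "tau i * (\<Sum>j\<in>R. W i j * x j) = (\<Sum>j\<in>R. tau i * W i j * x j)"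
    by (simp add: sum_distrib_left mult.assoc)
  also have "\<dots> = (\<Sum>j\<in>R. \<bar>W i j\<bar> * (tau j * x j))"
  proof (rule sum.cong)
    fix j assume j: "j \<in> R"
    have "tau i * W i j * x j = (tau i * W i j * tau j) * (tau j * x j)"
      using tau_sq[OF j] by (simp add: algebra_simps)
    then show "tau i * W i j * x j = \<bar>W i j\<bar> * (tau j * x j)" using gauge_term[OF i j] by simp
  qed simp
  also have "\<dots> = (\<Sum>j\<in>?U. \<bar>W i j\<bar> * (tau j * x j)) + (\<Sum>j\<in>?M. \<bar>W i j\<bar> * (tau j * x j))"
  proof -
    have fU: "finite ?U" and fM: "finite ?M" using finR unfolding Upset_def Umset_def by auto
    show ?thesis using sum.union_disjoint[OF fU fM part(2)[OF x]] part(1)[OF x] by simp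
  qed
  also have "(\<Sum>j\<in>?U. \<bar>W i j\<bar> * (tau j * x j)) = wsum W i ?U"
    unfolding wsum_def by (rule sum.cong) (auto simp: Upset_def tau_sq)
  also have "(\<Sum>j\<in>?M. \<bar>W i j\<bar> * (tau j * x j)) = - wsum W i ?M"
    unfolding wsum_def by (subst sum_negf[symmetric], rule sum.cong) (auto simp: Umset_def tau_sq)
  finally have r: "tau i * (\<Sum>j\<in>R. W i j * x j) = wsum W i ?U - wsum W i ?M" by simp
  have "\<bar>tau i * (\<Sum>j\<in>S. W i j * x j)\<bar> = \<bar>\<Sum>j\<in>S. W i j * x j\<bar>"
    using tauv i by (auto simp: abs_mult)
  also have "\<dots> \<le> (\<Sum>j\<in>S. \<bar>W i j * x j\<bar>)" by (rule sum_abs)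
  also have "\<dots> = wsum W i S" unfolding wsum_def
  proof (rule sum.cong)
    fix j assume "j \<in> S"
    then have "\<bar>x j\<bar> = 1" using prof_val[OF x, of j] VRS by auto
    then show "\<bar>W i j * x j\<bar> = \<bar>W i j\<bar>" by (simp add: abs_mult)
  qed simp
  finally have s: "\<bar>tau i * (\<Sum>j\<in>S. W i j * x j)\<bar> \<le> wsum W i S" .
  have e: "tau i * inp V W h x i = tau i * h i + tau i * (\<Sum>j\<in>R. W i j * x j) + tau i * (\<Sum>j\<in>S. W i j * x j)"
    unfolding split by (simp add: algebra_simps)
  show "tau i * inp V W h x i \<ge> tau i * h i + wsum W i ?U - wsum W i ?M - wsum W i S"
    using e r s by linarith
  show "tau i * inp V W h x i \<le> tau i * h i + wsum W i ?U - wsum W i ?M + wsum W i S"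
    using e r s by linarith
qed

lemma tau_ne: "j \<in> R \<Longrightarrow> tau j \<noteq> - tau j" using tauv by auto

lemma move_Um_sets:
  assumes x: "x \<in> profiles V" and i: "i \<in> Umset R tau x"
  shows "Upset R tau (x(i := - x i)) = insert i (Upset R tau x)"
    and "Umset R tau (x(i := - x i)) = Umset R tau x - {i}"
proof -
  have iR: "i \<in> R" and xi: "x i = - tau i" using i unfolding Umset_def by auto
  show "Upset R tau (x(i := - x i)) = insert i (Upset R tau x)"
    unfolding Upset_def using iR xi by auto
  show "Umset R tau (x(i := - x i)) = Umset R tau x - {i}"
    unfolding Umset_def using iR xi tau_ne[OF iR] by auto
qed

lemma move_Up_sets:
  assumes x: "x \<in> profiles V" and i: "i \<in> Upset R tau x"
  shows "Upset R tau (x(i := - x i)) = Upset R tau x - {i}"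
    and "Umset R tau (x(i := - x i)) = insert i (Umset R tau x)"
proof -
  have iR: "i \<in> R" and xi: "x i = tau i" using i unfolding Upset_def by auto
  show "Upset R tau (x(i := - x i)) = Upset R tau x - {i}"
    unfolding Upset_def using iR xi tau_ne[OF iR] by auto
  show "Umset R tau (x(i := - x i)) = insert i (Umset R tau x)"
    unfolding Umset_def using iR xi by auto
qed

lemma finUp: "finite (Upset R tau x)" and finUm: "finite (Umset R tau x)"
  using finR unfolding Upset_def Umset_def by auto

lemma wsum_insert_self: "W i i = 0 \<Longrightarrow> finite A \<Longrightarrow> wsum W i (insert i A) = wsum W i A"
  unfolding wsum_def by (simp add: sum.insert_if)

lemma wsum_remove_self: "W i i = 0 \<Longrightarrow> finite A \<Longrightarrow> wsum W i (A - {i}) = wsum W i A"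
  unfolding wsum_def by (cases "i \<in> A") (simp_all add: sum_diff1)

lemma wsum_mono: "A \<subseteq> B \<Longrightarrow> finite B \<Longrightarrow> wsum W i A \<le> wsum W i B"
  unfolding wsum_def by (rule sum_mono2) auto

lemma iV: "i \<in> R \<Longrightarrow> i \<in> V" using VRS by auto

lemma step_Um:
  assumes x: "x \<in> profiles V" and i: "i \<in> Umset R tau x"
    and c: "wsum W i (Umset R tau x) - (tau i * h i - wsum W i S) < wsum W i (Upset R tau x)"
  shows "br_step V W h x (x(i := - x i))"
proof -
  have iR: "i \<in> R" and xi: "x i = - tau i" using i unfolding Umset_def by auto
  have "tau i * inp V W h x i > 0" using gauge_bounds(1)[OF x iR] c by linarith
  then have "x i * inp V W h x i \<le> 0" unfolding xi by simp
  then show ?thesis using br_step_iff[OF x] iV[OF iR] by blast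
qed

lemma step_Up:
  assumes x: "x \<in> profiles V" and i: "i \<in> Upset R tau x"
    and c: "wsum W i (Upset R tau x) + (tau i * h i + wsum W i S) < wsum W i (Umset R tau x)"
  shows "br_step V W h x (x(i := - x i))"
proof -
  have iR: "i \<in> R" and xi: "x i = tau i" using i unfolding Upset_def by auto
  have "tau i * inp V W h x i < 0" using gauge_bounds(2)[OF x iR] c by linarith
  then have "x i * inp V W h x i \<le> 0" unfolding xi by simp
  then show ?thesis using br_step_iff[OF x] iV[OF iR] by blast
qed

lemma phase2:
  "x \<in> profiles V \<Longrightarrow> Upset R tau x \<noteq> {} \<Longrightarrow>
   (\<forall>j\<in>Upset R tau x. \<not> (wsum W j (Upset R tau x) + (tau j * h j + wsum W j S) < wsum W j (Umset R tau x))) \<Longrightarrow>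
   \<exists>z. br_path V W h x z \<and> (\<forall>j\<in>R. z j = tau j)"
proof (induction "card (Umset R tau x)" arbitrary: x rule: less_induct)
  case less
  note x = less.prems(1)
  show ?case
  proof (cases "Umset R tau x = {}")
    case True
    then have "\<forall>j\<in>R. x j = tau j" using part(1)[OF x] unfolding Upset_def by auto
    then show ?thesis unfolding br_path_def by blast
  next
    case False
    have "\<exists>i. (i \<in> Upset R tau x \<and> wsum W i (Upset R tau x) + (tau i * h i + wsum W i S) < wsum W i (Umset R tau x)) \<or>
             (i \<in> Umset R tau x \<and> wsum W i (Umset R tau x) - (tau i * h i - wsum W i S) < wsum W i (Upset R tau x))"
      using indec[unfolded indecomposable_def, rule_format, of "Umset R tau x" "Upset R tau x"]
        part[OF x] False less.prems(2) by (simp add: Un_commute Int_commute)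
    then obtain i where iM: "i \<in> Umset R tau x"
      and c: "wsum W i (Umset R tau x) - (tau i * h i - wsum W i S) < wsum W i (Upset R tau x)"
      using less.prems(3) by blast
    have iR: "i \<in> R" using iM unfolding Umset_def by auto
    have Wii: "W i i = 0" using diag iV[OF iR] by simp
    define x' where "x' = x(i := - x i)"
    have st: "br_step V W h x x'" unfolding x'_def by (rule step_Um[OF x iM c])
    have x': "x' \<in> profiles V" using br_step_profiles[OF x st] .
    have U': "Upset R tau x' = insert i (Upset R tau x)" and M': "Umset R tau x' = Umset R tau x - {i}"
      unfolding x'_def using move_Um_sets[OF x iM] by auto
    have card: "card (Umset R tau x') < card (Umset R tau x)"
      unfolding M' by (rule card_Diff1_less[OF finUm iM])
    have ne: "Upset R tau x' \<noteq> {}" unfolding U' by simp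
    have hyp: "\<forall>j\<in>Upset R tau x'. \<not> (wsum W j (Upset R tau x') + (tau j * h j + wsum W j S) < wsum W j (Umset R tau x'))"
    proof
      fix j assume j: "j \<in> Upset R tau x'"
      show "\<not> (wsum W j (Upset R tau x') + (tau j * h j + wsum W j S) < wsum W j (Umset R tau x'))"
      proof (cases "j = i")
        case True
        have "wsum W i (Upset R tau x') = wsum W i (Upset R tau x)"
          unfolding U' using wsum_insert_self[OF Wii finUp] .
        moreover have "wsum W i (Umset R tau x') = wsum W i (Umset R tau x)"
          unfolding M' using wsum_remove_self[OF Wii finUm] .
        ultimately show ?thesis unfolding True using c wsum_nonneg[of i S] by linarith
      next
        case False
        then have jU: "j \<in> Upset R tau x" using j U' by auto
        have "wsum W j (Upset R tau x) \<le> wsum W j (Upset R tau x')"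
          unfolding U' by (rule wsum_mono) (auto simp: finUp)
        moreover have "wsum W j (Umset R tau x') \<le> wsum W j (Umset R tau x)"
          unfolding M' by (rule wsum_mono) (auto simp: finUm)
        ultimately show ?thesis using less.prems(3) jU by force
      qed
    qed
    obtain z where z: "br_path V W h x' z" "\<forall>j\<in>R. z j = tau j"
      using less.hyps[OF card x' ne hyp] by blast
    have "br_path V W h x z" using st z(1) unfolding br_path_def
      by (rule converse_rtranclp_into_rtranclp)
    then show ?thesis using z(2) by blast
  qed
qed

lemma phase1:
  "x \<in> profiles V \<Longrightarrow> \<exists>z s. (s = 1 \<or> s = -1) \<and> br_path V W h x z \<and> (\<forall>j\<in>R. z j = s * tau j)"
proof (induction "card (Upset R tau x)" arbitrary: x rule: less_induct)
  case less
  note x = less.prems(1)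
  show ?case
  proof (cases "Upset R tau x = {}")
    case True
    then have "\<forall>j\<in>R. x j = (-1) * tau j" using part(1)[OF x] unfolding Umset_def by auto
    moreover have "br_path V W h x x" unfolding br_path_def by blast
    ultimately show ?thesis by blast
  next
    case False
    show ?thesis
    proof (cases "\<exists>i\<in>Upset R tau x. wsum W i (Upset R tau x) + (tau i * h i + wsum W i S) < wsum W i (Umset R tau x)")
      case True
      then obtain i where iU: "i \<in> Upset R tau x"
        and c: "wsum W i (Upset R tau x) + (tau i * h i + wsum W i S) < wsum W i (Umset R tau x)" by blast
      define x' where "x' = x(i := - x i)"
      have st: "br_step V W h x x'" unfolding x'_def by (rule step_Up[OF x iU c])
      have x': "x' \<in> profiles V" using br_step_profiles[OF x st] .
      have U': "Upset R tau x' = Upset R tau x - {i}"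
        unfolding x'_def using move_Up_sets[OF x iU] by auto
      have card: "card (Upset R tau x') < card (Upset R tau x)"
        unfolding U' by (rule card_Diff1_less[OF finUp iU])
      obtain z s where z: "s = 1 \<or> s = -1" "br_path V W h x' z" "\<forall>j\<in>R. z j = s * tau j"
        using less.hyps[OF card x'] by blast
      have "br_path V W h x z" using st z(2) unfolding br_path_def
        by (rule converse_rtranclp_into_rtranclp)
      then show ?thesis using z(1,3) by blast
    next
      case nc: False
      obtain z where "br_path V W h x z" "\<forall>j\<in>R. z j = tau j"
        using phase2[OF x False] nc by blast
      then show ?thesis by (intro exI[of _ z] exI[of _ 1]) auto
    qed
  qed
qed

lemma lock:
  assumes z: "z \<in> profiles V" and sv: "s = 1 \<or> s = -1" and c: "\<forall>j\<in>R. z j = s * tau j"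
    and i: "i \<in> R"
  shows "z i * inp V W h z i > 0"
proof -
  have th: "tau i * h i \<ge> - \<bar>h i\<bar>" and th2: "tau i * h i \<le> \<bar>h i\<bar>"
    using tauv i by auto
  have st: "wsum W i R - \<bar>h i\<bar> > wsum W i S" using strong i by auto
  from sv show ?thesis
  proof
    assume s1: "s = 1"
    have e1: "Upset R tau z = R" and e2: "Umset R tau z = {}"
      using c tau_ne unfolding Upset_def Umset_def s1 by auto
    have "wsum W i {} = 0" unfolding wsum_def by simp
    moreover have "tau i * inp V W h z i \<ge> tau i * h i + wsum W i R - wsum W i {} - wsum W i S"
      using gauge_bounds(1)[OF z i] unfolding e1 e2 .
    ultimately have "tau i * inp V W h z i > 0" using th st by linarith
    then show ?thesis using c i s1 by simp
  next
    assume s1: "s = -1"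
    have e1: "Upset R tau z = {}" and e2: "Umset R tau z = R"
      using c tau_ne unfolding Upset_def Umset_def s1 by auto
    have "wsum W i {} = 0" unfolding wsum_def by simp
    moreover have "tau i * inp V W h z i \<le> tau i * h i + wsum W i {} - wsum W i R + wsum W i S"
      using gauge_bounds(2)[OF z i] unfolding e1 e2 .
    ultimately have "tau i * inp V W h z i < 0" using th2 st by linarith
    then show ?thesis using c i s1 by simp
  qed
qed

lemma step_cons:
  assumes z: "z \<in> profiles V" and sv: "s = 1 \<or> s = -1" and c: "\<forall>j\<in>R. z j = s * tau j"
    and st: "br_step V W h z y"
  shows "\<exists>k\<in>S. y = z(k := - z k) \<and> z k * inp V W h z k \<le> 0"
proof -
  obtain k where k: "k \<in> V" "y = z(k := - z k)" "z k * inp V W h z k \<le> 0"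
    using st br_step_iff[OF z] by blast
  have "k \<notin> R" using lock[OF z sv c] k(3) by force
  then show ?thesis using k VRS by blast
qed

lemma path_cons:
  assumes "br_path V W h z y" "z \<in> profiles V" "s = 1 \<or> s = -1" "\<forall>j\<in>R. z j = s * tau j"
  shows "y \<in> profiles V \<and> (\<forall>j\<in>R. y j = s * tau j)"
  using assms(1) unfolding br_path_def
proof (induction rule: rtranclp_induct)
  case base
  then show ?case using assms by simp
next
  case (step y u)
  then obtain k where k: "k \<in> S" "u = y(k := - y k)"
    using step_cons[OF _ assms(3)] by blast
  have "u \<in> profiles V" using br_step_profiles step by blast
  moreover have "\<forall>j\<in>R. u j = s * tau j"
  proof
    fix j assume j: "j \<in> R"
    then have "j \<noteq> k" using k(1) disj by auto
    then show "u j = s * tau j" using k(2) step.IH j by simp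
  qed
  ultimately show ?case by blast
qed

definition pot :: "('v \<Rightarrow> real) \<Rightarrow> real" where
  "pot x = (\<Sum>i\<in>S. x i * (h i + (\<Sum>j\<in>R. W i j * x j))) + (\<Sum>i\<in>S. \<Sum>j\<in>S. W i j * x i * x j) / 2"

lemma pot_upd:
  assumes k: "k \<in> S"
  shows "pot (x(k := b)) - pot x = (b - x k) * inp V W h x k"
proof -
  define y where "y = x(k := b)"
  define d where "d = b - x k"
  have Wkk: "W k k = 0" using diag k VRS by auto
  have kR: "k \<notin> R" using k disj by auto
  define c where "c i = h i + (\<Sum>j\<in>R. W i j * x j)" for i
  have cy: "h i + (\<Sum>j\<in>R. W i j * y j) = c i" for i
    unfolding c_def y_def using kR by (auto intro!: sum.cong)
  have yv: "y j = x j + (if j = k then d else 0)" for j unfolding y_def d_def by auto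
  have A: "(\<Sum>i\<in>S. y i * c i) = (\<Sum>i\<in>S. x i * c i) + d * c k"
  proof -
    have "(\<Sum>i\<in>S. y i * c i) = (\<Sum>i\<in>S. x i * c i + (if i = k then d * c k else 0))"
      by (rule sum.cong) (auto simp: yv algebra_simps)
    also have "\<dots> = (\<Sum>i\<in>S. x i * c i) + d * c k"
      using k finS by (simp add: sum.distrib)
    finally show ?thesis .
  qed
  have trm: "W i j * y i * y j = W i j * x i * x j + (if i = k then d * (W k j * x j) else 0)
      + (if j = k then d * (W i k * x i) else 0)" for i j
    using Wkk by (cases "i = k"; cases "j = k") (auto simp: yv algebra_simps)
  have B: "(\<Sum>i\<in>S. \<Sum>j\<in>S. W i j * y i * y j) = (\<Sum>i\<in>S. \<Sum>j\<in>S. W i j * x i * x j)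
      + d * (\<Sum>j\<in>S. W k j * x j) + d * (\<Sum>i\<in>S. W i k * x i)"
  proof -
    have s1: "(\<Sum>i\<in>S. \<Sum>j\<in>S. W i j * y i * y j) = (\<Sum>i\<in>S. \<Sum>j\<in>S. W i j * x i * x j)
       + (\<Sum>i\<in>S. \<Sum>j\<in>S. if i = k then d * (W k j * x j) else 0)
       + (\<Sum>i\<in>S. \<Sum>j\<in>S. if j = k then d * (W i k * x i) else 0)"
      unfolding trm by (simp add: sum.distrib)
    have "(\<Sum>i\<in>S. \<Sum>j\<in>S. if i = k then d * (W k j * x j) else 0)
        = (\<Sum>i\<in>S. if i = k then (\<Sum>j\<in>S. d * (W k j * x j)) else 0)"
      by (rule sum.cong) auto
    also have "\<dots> = (\<Sum>j\<in>S. d * (W k j * x j))" using k finS by simp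
    also have "\<dots> = d * (\<Sum>j\<in>S. W k j * x j)" by (simp add: sum_distrib_left)
    finally have s2: "(\<Sum>i\<in>S. \<Sum>j\<in>S. if i = k then d * (W k j * x j) else 0) = d * (\<Sum>j\<in>S. W k j * x j)" .
    have "(\<Sum>i\<in>S. \<Sum>j\<in>S. if j = k then d * (W i k * x i) else 0) = (\<Sum>i\<in>S. d * (W i k * x i))"
      by (rule sum.cong) (use k finS in simp_all)
    also have "\<dots> = d * (\<Sum>i\<in>S. W i k * x i)" by (simp add: sum_distrib_left)
    finally have s3: "(\<Sum>i\<in>S. \<Sum>j\<in>S. if j = k then d * (W i k * x i) else 0) = d * (\<Sum>i\<in>S. W i k * x i)" .
    show ?thesis using s1 s2 s3 by simp
  qed
  have sym: "(\<Sum>i\<in>S. W i k * x i) = (\<Sum>j\<in>S. W k j * x j)"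
    using undir k unfolding undirected_on_def by (auto intro!: sum.cong)
  have inpk: "inp V W h x k = c k + (\<Sum>j\<in>S. W k j * x j)"
    unfolding inp_def c_def VRS using finR finS disj by (simp add: sum.union_disjoint)
  have "pot y = (\<Sum>i\<in>S. y i * c i) + (\<Sum>i\<in>S. \<Sum>j\<in>S. W i j * y i * y j) / 2"
    unfolding pot_def using cy by simp
  moreover have "pot x = (\<Sum>i\<in>S. x i * c i) + (\<Sum>i\<in>S. \<Sum>j\<in>S. W i j * x i * x j) / 2"
    unfolding pot_def c_def by simp
  ultimately have "pot y - pot x = d * c k + d * (\<Sum>j\<in>S. W k j * x j)"
    using A B sym by (simp add: field_simps)
  then show ?thesis unfolding y_def d_def inpk by (simp add: algebra_simps)
qed

lemma path_mono:
  assumes "br_path V W h z y" "z \<in> profiles V" "s = 1 \<or> s = -1" "\<forall>j\<in>R. z j = s * tau j"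
  shows "pot z \<le> pot y"
  using assms(1) unfolding br_path_def
proof (induction rule: rtranclp_induct)
  case base
  then show ?case by simp
next
  case (step y u)
  have yc: "y \<in> profiles V \<and> (\<forall>j\<in>R. y j = s * tau j)"
    using path_cons[OF _ assms(2-4)] step(1) unfolding br_path_def by blast
  then obtain k where k: "k \<in> S" "u = y(k := - y k)" "y k * inp V W h y k \<le> 0"
    using step_cons[OF _ assms(3) _ step(2)] by blast
  have "pot u - pot y = (- y k - y k) * inp V W h y k" unfolding k(2) by (rule pot_upd[OF k(1)])
  then have "pot u \<ge> pot y" using k(3) by (simp add: algebra_simps)
  then show ?case using step.IH by simp
qed

lemma main: "\<exists>X \<subseteq> nash V W h. globally_BR_stable V W h X"
proof -
  define X where "X = {x \<in> profiles V. \<forall>y. br_path V W h x y \<longrightarrow> y \<in> nash V W h}"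
  have sub: "X \<subseteq> nash V W h" unfolding X_def br_path_def by auto
  have inv: "BR_invariant V W h X"
    unfolding BR_invariant_def
  proof (intro ballI allI impI)
    fix x y assume x: "x \<in> X" and p: "br_path V W h x y"
    have "y \<in> profiles V" using br_path_profiles[OF p] x unfolding X_def by auto
    moreover have "\<forall>u. br_path V W h y u \<longrightarrow> u \<in> nash V W h"
      using x p unfolding X_def br_path_def by (auto intro: rtranclp_trans)
    ultimately show "y \<in> X" unfolding X_def by blast
  qed
  have reach: "globally_BR_reachable V W h X"
    unfolding globally_BR_reachable_def
  proof
    fix x assume x: "x \<in> profiles V"
    obtain z s where zs: "s = 1 \<or> s = -1" "br_path V W h x z" "\<forall>j\<in>R. z j = s * tau j"
      using phase1[OF x] by blast
    have z: "z \<in> profiles V" using br_path_profiles[OF zs(2) x] .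
    define Rc where "Rc = {y. br_path V W h z y}"
    have Rcp: "Rc \<subseteq> profiles V" unfolding Rc_def using br_path_profiles[OF _ z] by blast
    have finRc: "finite Rc" using finite_subset[OF Rcp finite_profiles[OF finV]] .
    have zRc: "z \<in> Rc" unfolding Rc_def br_path_def by simp
    define m where "m = Max (pot ` Rc)"
    have "m \<in> pot ` Rc" unfolding m_def using finRc zRc by (intro Max_in) auto
    then obtain y where yR: "y \<in> Rc" and ym: "pot y = m" by blast
    have maxm: "pot u \<le> pot y" if "u \<in> Rc" for u
      unfolding ym m_def using finRc that by (intro Max_ge) auto
    have yc: "y \<in> profiles V \<and> (\<forall>j\<in>R. y j = s * tau j)"
      using path_cons[OF _ z zs(1,3)] yR unfolding Rc_def by blast
    have "y \<in> X" unfolding X_def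
    proof (intro CollectI conjI allI impI)
      show "y \<in> profiles V" using yc by blast
      fix u assume pu: "br_path V W h y u"
      have uR: "u \<in> Rc" using yR pu unfolding Rc_def br_path_def by (auto intro: rtranclp_trans)
      have uc: "u \<in> profiles V \<and> (\<forall>j\<in>R. u j = s * tau j)"
        using path_cons[OF _ z zs(1,3)] uR unfolding Rc_def by blast
      have "pot y \<le> pot u" using path_mono[OF pu _ zs(1)] yc by blast
      moreover have "pot u \<le> pot y" using maxm[OF uR] .
      ultimately have pe: "pot u = pot y" by simp
      have "\<forall>i\<in>V. u i * inp V W h u i \<ge> 0"
      proof
        fix i assume iV: "i \<in> V"
        show "u i * inp V W h u i \<ge> 0"
        proof (cases "i \<in> R")
          case True
          then show ?thesis using lock[OF _ zs(1) _ True] uc by force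
        next
          case False
          then have iS: "i \<in> S" using iV VRS by auto
          show ?thesis
          proof (rule ccontr)
            assume "\<not> u i * inp V W h u i \<ge> 0"
            then have neg: "u i * inp V W h u i < 0" by simp
            define u' where "u' = u(i := - u i)"
            have "br_step V W h u u'" unfolding u'_def
              using br_step_iff[of u] uc iV neg by force
            then have "u' \<in> Rc" using uR unfolding Rc_def br_path_def by auto
            then have "pot u' \<le> pot y" by (rule maxm)
            moreover have "pot u' - pot u = (- u i - u i) * inp V W h u i"
              unfolding u'_def by (rule pot_upd[OF iS])
            ultimately show False using neg pe by (simp add: algebra_simps)
          qed
        qed
      qed
      then show "u \<in> nash V W h" using nash_iff uc by blast
    qed
    moreover have "br_path V W h x y" using zs(2) yR unfolding Rc_def br_path_def by auto
    ultimately show "\<exists>y\<in>X. br_path V W h x y" by blast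
  qed
  show ?thesis using sub inv reach unfolding globally_BR_stable_def by blast
qed

end

theorem corollary4:
  fixes V R S :: "'v set" and W :: "'v \<Rightarrow> 'v \<Rightarrow> real" and h tau :: "'v \<Rightarrow> real"
  assumes "network V W"
    and "V = R \<union> S" and "R \<inter> S = {}"
    and "structurally_balanced R W"
    and "undirected_on S W"
    and "\<forall>i\<in>R. tau i = -1 \<or> tau i = 1"
    and "gauge_unsigned R W tau"
    and "indecomposable R W (\<lambda>i. tau i * h i - wsum W i S) (\<lambda>i. tau i * h i + wsum W i S)"
    and "\<forall>i\<in>R. wsum W i R - \<bar>h i\<bar> > wsum W i S"
  shows "\<exists>X \<subseteq> nash V W h. globally_BR_stable V W h X"
proof -
  interpret st V W h R S tau
    using assms unfolding network_def by unfold_locales auto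
  show ?thesis by (rule main)
qed

end
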